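(* For any $i\in\{0,\dots,m-1\}$ such that $B_i\le\kappa B_{i+1}$, at least one of the following holds: (i) $\{\operatorname{pr}(b_1),\dots,\operatorname{pr}(b_i)\}$ is a basis of $\Lambda$; (ii) $\Lambda$ is not generated by elements of norm $\le\kappa B_{i+1}$; (iii) $\varphi(\beta)\le B_i$.
   Context: Let $m\ge2$ and $1\le p\le m$ be integers and $P\in\mathbb{R}^{m\times p}$. Vectors of $\mathbb{Z}^m$, $\mathbb{R}^m$ are row vectors and all norms $\|\cdot\|$ are Euclidean. Let $\Lambda=\{x\in\mathbb{Z}^m : xP=0\}$. For $B\ge0$ let $\varepsilon(B)=\min\{\|uP\| : u\in\mathbb{Z}^m,\ \|u\|\le B,\ uP\neq0\}$ (with $\varepsilon(B)=+\infty$ if this set is empty), and for $s\ge0$ let $\varphi(s)=\sup\{B\ge0 : mB/\varepsilon(B)\le s\}\in[0,+\infty]$, with the convention $mB/(+\infty)=0$. Let $\beta>0$ and let $P_\beta\in\mathbb{Z}^{m\times p}$ be such that every entry of $P_\beta-\beta P$ lies in $[-\tfrac12,\tfrac12]$. Let $R\subset\mathbb{Z}^{p+m}$ be the lattice spanned by the rows of the $m\times(p+m)$ matrix $[\,P_\beta\mid I_m\,]$, and let $b_1,\dots,b_m$ be a basis of $R$ that is LLL-reduced (Lenstra–Lenstra–Lovász, with parameter $3/4$) and satisfies $\|b_1\|\le\dots\le\|b_m\|$. Set $B_0=0$, $B_i=\|b_i\|$ for $1\le i\le m$, $\kappa=m^{-1}2^{-(m+1)/2}$, and let $\operatorname{pr}\colon\mathbb{Z}^{p+m}\to\mathbb{Z}^m$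 be the projection onto the last $m$ coordinates. *)

theory Defs
  imports Complex_Main "HOL-Library.Extended_Real"
begin

text \<open>Integer / real vectors of dimension n are represented as functions on nat;
  integer vectors of Z^n are required to vanish at indices \<ge> n.
  Matrices are functions nat => nat => _ (row index, column index).\<close>

definition zvecs :: "nat \<Rightarrow> (nat \<Rightarrow> int) set" where
  "zvecs n = {x. \<forall>k\<ge>n. x k = 0}"

definition inorm :: "nat \<Rightarrow> (nat \<Rightarrow> int) \<Rightarrow> real" where
  "inorm n x = sqrt (\<Sum>k<n. (real_of_int (x k))^2)"

definition rinner :: "nat \<Rightarrow> (nat \<Rightarrow> real) \<Rightarrow> (nat \<Rightarrow> real) \<Rightarrow> real" where
  "rinner n x y = (\<Sum>k<n. x k * y k)"

definition rnorm :: "nat \<Rightarrow> (nat \<Rightarrow> real) \<Rightarrow> real" where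
  "rnorm n x = sqrt (rinner n x x)"

definition vecmat :: "nat \<Rightarrow> nat \<Rightarrow> (nat \<Rightarrow> nat \<Rightarrow> real) \<Rightarrow> (nat \<Rightarrow> int) \<Rightarrow> (nat \<Rightarrow> real)" where
  "vecmat m p P u = (\<lambda>j. if j < p then (\<Sum>i<m. real_of_int (u i) * P i j) else 0)"

definition Lam :: "nat \<Rightarrow> nat \<Rightarrow> (nat \<Rightarrow> nat \<Rightarrow> real) \<Rightarrow> (nat \<Rightarrow> int) set" where
  "Lam m p P = {x \<in> zvecs m. vecmat m p P x = (\<lambda>_. 0)}"

text \<open>epsilon(B) as an extended real; the infimum of the empty set is +infinity.
  (The minimum is attained since the set is finite.)\<close>
definition eps :: "nat \<Rightarrow> nat \<Rightarrow> (nat \<Rightarrow> nat \<Rightarrow> real) \<Rightarrow> real \<Rightarrow> ereal" where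
  "eps m p P B = Inf (ereal ` {rnorm p (vecmat m p P u) | u.
      u \<in> zvecs m \<and> inorm m u \<le> B \<and> vecmat m p P u \<noteq> (\<lambda>_. 0)})"

definition phi :: "nat \<Rightarrow> nat \<Rightarrow> (nat \<Rightarrow> nat \<Rightarrow> real) \<Rightarrow> real \<Rightarrow> ereal" where
  "phi m p P s = Sup (ereal ` {B. B \<ge> 0 \<and>
      (if eps m p P B = \<infinity> then 0 else real m * B / real_of_ereal (eps m p P B)) \<le> s})"

definition zspan :: "(nat \<Rightarrow> int) set \<Rightarrow> (nat \<Rightarrow> int) set" where
  "zspan S = {(\<lambda>k. \<Sum>v\<in>F. c v * v k) | F c. finite F \<and> F \<subseteq> S}"

definition zindep :: "nat set \<Rightarrow> (nat \<Rightarrow> nat \<Rightarrow> int) \<Rightarrow> bool" where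
  "zindep I v = (\<forall>c. (\<lambda>k. \<Sum>i\<in>I. c i * v i k) = (\<lambda>_. 0) \<longrightarrow> (\<forall>i\<in>I. c i = 0))"

definition is_zbasis :: "nat set \<Rightarrow> (nat \<Rightarrow> nat \<Rightarrow> int) \<Rightarrow> (nat \<Rightarrow> int) set \<Rightarrow> bool" where
  "is_zbasis I v L = ((\<forall>i\<in>I. v i \<in> L) \<and> zindep I v \<and> L = zspan (v ` I))"

text \<open>Rows of [P_beta | I_m] in Z^(p+m) and the lattice R they span.\<close>
definition Rrow :: "nat \<Rightarrow> (nat \<Rightarrow> nat \<Rightarrow> int) \<Rightarrow> nat \<Rightarrow> (nat \<Rightarrow> int)" where
  "Rrow p Pb i = (\<lambda>k. if k < p then Pb i k else if k = p + i then 1 else 0)"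

definition lattice_R :: "nat \<Rightarrow> nat \<Rightarrow> (nat \<Rightarrow> nat \<Rightarrow> int) \<Rightarrow> (nat \<Rightarrow> int) set" where
  "lattice_R m p Pb = zspan (Rrow p Pb ` {..<m})"

primrec gso_app :: "nat \<Rightarrow> (nat \<Rightarrow> real) list \<Rightarrow> (nat \<Rightarrow> real) list \<Rightarrow> (nat \<Rightarrow> real) list" where
  "gso_app n acc [] = acc"
| "gso_app n acc (v # vs) =
     gso_app n (acc @ [(\<lambda>k. v k - (\<Sum>w\<leftarrow>acc. (rinner n v w / rinner n w w) * w k))]) vs"

definition gso :: "nat \<Rightarrow> (nat \<Rightarrow> real) list \<Rightarrow> (nat \<Rightarrow> real) list" where
  "gso n vs = gso_app n [] vs"

definition gs_mu :: "nat \<Rightarrow> (nat \<Rightarrow> real) list \<Rightarrow> nat \<Rightarrow> nat \<Rightarrow> real" where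
  "gs_mu n vs i j = rinner n (vs ! i) (gso n vs ! j) / rinner n (gso n vs ! j) (gso n vs ! j)"

definition lll_reduced :: "nat \<Rightarrow> real \<Rightarrow> (nat \<Rightarrow> real) list \<Rightarrow> bool" where
  "lll_reduced n delta vs =
    ((\<forall>i<length vs. \<forall>j<i. \<bar>gs_mu n vs i j\<bar> \<le> 1/2) \<and>
     (\<forall>i. 0 < i \<and> i < length vs \<longrightarrow>
        delta * (rnorm n (gso n vs ! (i-1)))^2 \<le>
        (rnorm n (\<lambda>k. (gso n vs ! i) k + gs_mu n vs i (i-1) * (gso n vs ! (i-1)) k))^2))"

text \<open>B_0 = 0, B_i = ||b_i|| (basis indexed 1..m, vectors in Z^n).\<close>
definition Bseq :: "nat \<Rightarrow> (nat \<Rightarrow> nat \<Rightarrow> int) \<Rightarrow> nat \<Rightarrow> real" where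
  "Bseq n b i = (if i = 0 then 0 else inorm n (b i))"

definition kappa :: "nat \<Rightarrow> real" where
  "kappa m = 1 / real m * 2 powr (- (real m + 1) / 2)"

definition pr :: "nat \<Rightarrow> nat \<Rightarrow> (nat \<Rightarrow> int) \<Rightarrow> (nat \<Rightarrow> int)" where
  "pr m p v = (\<lambda>k. if k < m then v (p + k) else 0)"

end

theory Submission
  imports Defs "HOL-Analysis.L2_Norm"
begin

lemma rinner_comm: "rinner n x y = rinner n y x"
  unfolding rinner_def by (simp add: mult.commute)

lemma rinner_add_left: "rinner n (\<lambda>k. f k + g k) y = rinner n f y + rinner n g y"
  unfolding rinner_def by (simp add: algebra_simps sum.distrib)

lemma rinner_diff_left: "rinner n (\<lambda>k. f k - g k) y = rinner n f y - rinner n g y"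
  unfolding rinner_def by (simp add: algebra_simps sum_subtractf)

lemma rinner_sum_left: "rinner n (\<lambda>k. \<Sum>l\<in>L. a l * h l k) y = (\<Sum>l\<in>L. a l * rinner n (h l) y)"
  unfolding rinner_def by (simp add: sum_distrib_left sum_distrib_right sum.swap[of _ L] mult.assoc)

lemma rinner_scale_left: "rinner n (\<lambda>k. c * f k) y = c * rinner n f y"
  unfolding rinner_def by (simp add: sum_distrib_left mult.assoc)

lemma rinner_self_nonneg: "0 \<le> rinner n x x"
  unfolding rinner_def by (simp add: sum_nonneg)

lemma rinner_self_zero: "rinner n w w = 0 \<Longrightarrow> rinner n y w = 0"
proof -
  assume "rinner n w w = 0"
  hence "\<forall>k\<in>{..<n}. w k * w k = 0" unfolding rinner_def
    by (subst sum_nonneg_eq_0_iff[symmetric]) auto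
  thus ?thesis unfolding rinner_def by simp
qed

lemma rinner_div_cancel: "(rinner n y w / rinner n w w) * rinner n w w = rinner n y w"
  using rinner_self_zero[of n w y] by (cases "rinner n w w = 0") auto

lemma rinner_L2: "rinner n x x = (L2_set x {..<n})^2"
  unfolding rinner_def L2_set_def by (simp add: sum_nonneg power2_eq_square)

lemma rnorm_L2: "rnorm n x = L2_set x {..<n}"
  unfolding rnorm_def rinner_L2 by simp

lemma rinner_CS: "(rinner n x y)^2 \<le> rinner n x x * rinner n y y"
proof -
  have "\<bar>rinner n x y\<bar> \<le> (\<Sum>k<n. \<bar>x k\<bar> * \<bar>y k\<bar>)"
    unfolding rinner_def by (rule order_trans[OF sum_abs]) (simp add: abs_mult)
  also have "\<dots> \<le> L2_set x {..<n} * L2_set y {..<n}" by (rule L2_set_mult_ineq)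
  finally have "\<bar>rinner n x y\<bar>^2 \<le> (L2_set x {..<n} * L2_set y {..<n})^2"
    by (rule power_mono) simp
  thus ?thesis by (simp add: rinner_L2 power_mult_distrib)
qed

lemma gso_app_len: "length (gso_app n acc vs) = length acc + length vs"
  by (induction vs arbitrary: acc) auto

lemma gso_app_prefix: "t < length acc \<Longrightarrow> gso_app n acc vs ! t = acc ! t"
  by (induction vs arbitrary: acc) (auto simp: nth_append)

lemma sum_list_map_nth: "(\<Sum>w\<leftarrow>xs. f w) = (\<Sum>l<length xs. f (xs ! l))"
  by (simp add: sum_list_sum_nth atLeast0LessThan)

lemma gso_app_nth:
  "t < length vs \<Longrightarrow> gso_app n acc vs ! (length acc + t) =
    (\<lambda>k. (vs!t) k - (\<Sum>l<length acc + t. (rinner n (vs!t) (gso_app n acc vs ! l) /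
        rinner n (gso_app n acc vs ! l) (gso_app n acc vs ! l)) * (gso_app n acc vs ! l) k))"
proof (induction vs arbitrary: acc t)
  case Nil then show ?case by simp
next
  case (Cons v vs)
  define new where "new = (\<lambda>k. v k - (\<Sum>w\<leftarrow>acc. (rinner n v w / rinner n w w) * w k))"
  have R: "gso_app n acc (v # vs) = gso_app n (acc @ [new]) vs" by (simp add: new_def)
  show ?case
  proof (cases t)
    case 0
    have pre: "\<And>l. l < length acc \<Longrightarrow> gso_app n (acc @ [new]) vs ! l = acc ! l"
      by (subst gso_app_prefix) (auto simp: nth_append)
    have e: "gso_app n (acc @ [new]) vs ! length acc = new"
      by (subst gso_app_prefix) auto
    have "(\<Sum>w\<leftarrow>acc. (rinner n v w / rinner n w w) * w k) =
      (\<Sum>l<length acc. (rinner n v (gso_app n (acc @ [new]) vs ! l) /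
        rinner n (gso_app n (acc @ [new]) vs ! l) (gso_app n (acc @ [new]) vs ! l)) * (gso_app n (acc @ [new]) vs ! l) k)" for k
      unfolding sum_list_map_nth by (rule sum.cong) (auto simp: pre)
    note sumeq = this
    have newk: "new k = v k - (\<Sum>w\<leftarrow>acc. (rinner n v w / rinner n w w) * w k)" for k
      by (simp add: new_def)
    have "gso_app n (acc @ [new]) vs ! length acc = (\<lambda>k. v k - (\<Sum>l<length acc. (rinner n v (gso_app n (acc @ [new]) vs ! l) /
        rinner n (gso_app n (acc @ [new]) vs ! l) (gso_app n (acc @ [new]) vs ! l)) * (gso_app n (acc @ [new]) vs ! l) k))"
      unfolding e proof (rule ext) fix k show "new k = v k - (\<Sum>l<length acc. (rinner n v (gso_app n (acc @ [new]) vs ! l) /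
        rinner n (gso_app n (acc @ [new]) vs ! l) (gso_app n (acc @ [new]) vs ! l)) * (gso_app n (acc @ [new]) vs ! l) k)"
        using newk[of k] sumeq[of k] by argo qed
    then show ?thesis using 0 R by simp
  next
    case (Suc t')
    with Cons.prems have "t' < length vs" by simp
    from Cons.IH[OF this, of "acc @ [new]"] show ?thesis unfolding R using Suc by simp
  qed
qed

lemma gso_len: "length (gso n vs) = length vs"
  by (simp add: gso_def gso_app_len)

lemma gso_eq: "t < length vs \<Longrightarrow> gso n vs ! t = (\<lambda>k. (vs!t) k - (\<Sum>l<t. gs_mu n vs t l * (gso n vs ! l) k))"
  using gso_app_nth[of t vs n "[]"] by (simp add: gso_def gs_mu_def)

lemma vs_eq: "t < length vs \<Longrightarrow> vs ! t = (\<lambda>k. (gso n vs ! t) k + (\<Sum>l<t. gs_mu n vs t l * (gso n vs ! l) k))"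
  using gso_eq[of t vs n] by (auto simp: fun_eq_iff)

lemma mu_mul: "gs_mu n vs t l * rinner n (gso n vs ! l) (gso n vs ! l) = rinner n (vs!t) (gso n vs ! l)"
  unfolding gs_mu_def by (rule rinner_div_cancel)

lemma gso_orth_lt: "t < length vs \<Longrightarrow> s < t \<Longrightarrow> rinner n (gso n vs ! t) (gso n vs ! s) = 0"
proof (induction t arbitrary: s rule: less_induct)
  case (less t)
  let ?G = "gso n vs"
  have ih: "rinner n (?G ! l) (?G ! s) = 0" if "l < t" "l \<noteq> s" for l
  proof (cases "s < l")
    case True then show ?thesis using less that by auto
  next
    case False
    hence "l < s" using that by auto
    then show ?thesis using less.IH[of s l] less.prems by (simp add: rinner_comm)
  qed
  have "rinner n (?G ! t) (?G ! s) = rinner n (vs!t) (?G!s) - (\<Sum>l<t. gs_mu n vs t l * rinner n (?G ! l) (?G ! s))"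
    by (subst gso_eq[OF less.prems(1)]) (simp add: rinner_diff_left rinner_sum_left)
  also have "(\<Sum>l<t. gs_mu n vs t l * rinner n (?G ! l) (?G ! s)) = (\<Sum>l<t. if l = s then rinner n (vs!t) (?G!s) else 0)"
    by (rule sum.cong) (auto simp: ih mu_mul)
  also have "\<dots> = rinner n (vs!t) (?G!s)" using less.prems by simp
  finally show ?case by simp
qed

lemma gso_orth: "t < length vs \<Longrightarrow> s < length vs \<Longrightarrow> s \<noteq> t \<Longrightarrow> rinner n (gso n vs ! t) (gso n vs ! s) = 0"
proof -
  assume a: "t < length vs" "s < length vs" "s \<noteq> t"
  show ?thesis
  proof (cases "s < t")
    case True then show ?thesis using a(1) by (rule gso_orth_lt[rotated])
  next
    case False then have "t < s" using a by auto
    then have "rinner n (gso n vs ! s) (gso n vs ! t) = 0" using a(2) by (rule gso_orth_lt[rotated])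
    then show ?thesis using rinner_comm[of n "gso n vs ! s" "gso n vs ! t"] by argo
  qed
qed

lemma vs_g_inner: "t < length vs \<Longrightarrow> s \<le> t \<Longrightarrow>
   rinner n (vs ! s) (gso n vs ! t) = (if s = t then rinner n (gso n vs ! t) (gso n vs ! t) else 0)"
proof -
  assume a: "t < length vs" "s \<le> t"
  have "rinner n (vs ! s) (gso n vs ! t) = rinner n (\<lambda>k. (gso n vs ! s) k + (\<Sum>l<s. gs_mu n vs s l * (gso n vs ! l) k)) (gso n vs ! t)"
    using a vs_eq[of s vs n] by simp
  also have "\<dots> = rinner n (gso n vs ! s) (gso n vs ! t) +
     (\<Sum>l<s. gs_mu n vs s l * rinner n (gso n vs ! l) (gso n vs ! t))"
    by (simp only: rinner_add_left rinner_sum_left)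
  also have "(\<Sum>l<s. gs_mu n vs s l * rinner n (gso n vs ! l) (gso n vs ! t)) = 0"
    using a by (intro sum.neutral) (auto simp: gso_orth)
  finally have e: "rinner n (vs ! s) (gso n vs ! t) = rinner n (gso n vs ! s) (gso n vs ! t)" by simp
  show ?thesis
  proof (cases "s = t")
    case True then show ?thesis using e by simp
  next
    case False
    have "rinner n (gso n vs ! t) (gso n vs ! s) = 0" using a False by (intro gso_orth) auto
    then have "rinner n (gso n vs ! s) (gso n vs ! t) = 0" using rinner_comm[of n "gso n vs ! s" "gso n vs ! t"] by argo
    then show ?thesis using e False by simp
  qed
qed

lemma vs_norm: "t < length vs \<Longrightarrow> rinner n (vs ! t) (vs ! t) =
   rinner n (gso n vs ! t) (gso n vs ! t) + (\<Sum>l<t. (gs_mu n vs t l)^2 * rinner n (gso n vs ! l) (gso n vs ! l))"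
proof -
  assume a: "t < length vs"
  have "rinner n (vs ! t) (vs ! t) = rinner n (vs ! t) (\<lambda>k. (gso n vs ! t) k + (\<Sum>l<t. gs_mu n vs t l * (gso n vs ! l) k))"
    using a vs_eq[of t vs n] by simp
  also have "\<dots> = rinner n (\<lambda>k. (gso n vs ! t) k + (\<Sum>l<t. gs_mu n vs t l * (gso n vs ! l) k)) (vs ! t)"
    by (rule rinner_comm)
  also have "\<dots> = rinner n (gso n vs ! t) (vs ! t) + (\<Sum>l<t. gs_mu n vs t l * rinner n (gso n vs ! l) (vs ! t))"
    by (simp only: rinner_add_left rinner_sum_left)
  also have "rinner n (gso n vs ! t) (vs ! t) = rinner n (gso n vs ! t) (gso n vs ! t)"
    using vs_g_inner[OF a, of t] rinner_comm[of n "gso n vs ! t" "vs ! t"] by simp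
  also have "(\<Sum>l<t. gs_mu n vs t l * rinner n (gso n vs ! l) (vs ! t)) = (\<Sum>l<t. (gs_mu n vs t l)^2 * rinner n (gso n vs ! l) (gso n vs ! l))"
  proof (rule sum.cong)
    fix l assume "l \<in> {..<t}"
    have "rinner n (gso n vs ! l) (vs ! t) = gs_mu n vs t l * rinner n (gso n vs ! l) (gso n vs ! l)"
      using mu_mul[of n vs t l] rinner_comm[of n "gso n vs ! l" "vs ! t"] by simp
    then show "gs_mu n vs t l * rinner n (gso n vs ! l) (vs ! t) = (gs_mu n vs t l)^2 * rinner n (gso n vs ! l) (gso n vs ! l)"
      by (simp add: power2_eq_square)
  qed simp
  finally show ?thesis .
qed

lemma rnorm_sq: "(rnorm n x)^2 = rinner n x x"
  unfolding rnorm_def using rinner_self_nonneg[of n x] by simp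

lemma lll_step:
  assumes lll: "lll_reduced n (3/4) vs" and t: "0 < t" "t < length vs"
  shows "rinner n (gso n vs ! (t-1)) (gso n vs ! (t-1)) \<le> 2 * rinner n (gso n vs ! t) (gso n vs ! t)"
proof -
  define g where "g = gso n vs ! t"
  define g' where "g' = gso n vs ! (t-1)"
  define \<mu> where "\<mu> = gs_mu n vs t (t-1)"
  have orth: "rinner n g' g = 0" unfolding g_def g'_def using t by (intro gso_orth) auto
  have orth': "rinner n g g' = 0" using orth rinner_comm[of n g g'] by argo
  define X where "X = (\<lambda>k. g k + \<mu> * g' k)"
  have a: "rinner n g X = rinner n g g"
    unfolding X_def using rinner_comm[of n g "(\<lambda>k. g k + \<mu> * g' k)"]
    by (simp add: rinner_add_left rinner_scale_left orth)
  have b: "rinner n g' X = \<mu> * rinner n g' g'"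
    unfolding X_def using rinner_comm[of n g' "(\<lambda>k. g k + \<mu> * g' k)"]
    by (simp add: rinner_add_left rinner_scale_left orth')
  have XX: "rinner n X X = rinner n g g + \<mu>^2 * rinner n g' g'"
    using a b unfolding X_def by (simp add: rinner_add_left rinner_scale_left power2_eq_square)
  have mu: "\<bar>\<mu>\<bar> \<le> 1/2" using lll t unfolding lll_reduced_def \<mu>_def by auto
  have mu2: "\<mu>^2 \<le> 1/4"
  proof -
    have "\<bar>\<mu>\<bar>^2 \<le> (1/2)^2" by (rule power_mono[OF mu]) simp
    thus ?thesis by (simp add: power2_eq_square)
  qed
  have "3/4 * (rnorm n g')^2 \<le> (rnorm n X)^2"
    using lll t unfolding lll_reduced_def X_def g_def g'_def \<mu>_def by auto
  hence "3/4 * rinner n g' g' \<le> rinner n g g + \<mu>^2 * rinner n g' g'"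
    by (simp add: rnorm_sq XX)
  moreover have "\<mu>^2 * rinner n g' g' \<le> 1/4 * rinner n g' g'"
    by (rule mult_right_mono[OF mu2 rinner_self_nonneg])
  ultimately show ?thesis unfolding g_def g'_def by linarith
qed

lemma lll_pow:
  assumes lll: "lll_reduced n (3/4) vs" and "l \<le> t" "t < length vs"
  shows "rinner n (gso n vs ! l) (gso n vs ! l) \<le> 2^(t-l) * rinner n (gso n vs ! t) (gso n vs ! t)"
  using assms(2,3)
proof (induction t)
  case 0 then show ?case by simp
next
  case (Suc t)
  show ?case
  proof (cases "l = Suc t")
    case True then show ?thesis by simp
  next
    case False
    hence "l \<le> t" using Suc by auto
    hence ih: "rinner n (gso n vs ! l) (gso n vs ! l) \<le> 2^(t-l) * rinner n (gso n vs ! t) (gso n vs ! t)"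
      using Suc by auto
    have st: "rinner n (gso n vs ! t) (gso n vs ! t) \<le> 2 * rinner n (gso n vs ! Suc t) (gso n vs ! Suc t)"
      using lll_step[OF lll, of "Suc t"] Suc by auto
    have "(2::real)^(t-l) * rinner n (gso n vs ! t) (gso n vs ! t) \<le> 2^(t-l) * (2 * rinner n (gso n vs ! Suc t) (gso n vs ! Suc t))"
      by (rule mult_left_mono[OF st]) simp
    also have "\<dots> = 2^(Suc t - l) * rinner n (gso n vs ! Suc t) (gso n vs ! Suc t)"
      using \<open>l \<le> t\<close> by (simp add: Suc_diff_le)
    finally show ?thesis using ih by linarith
  qed
qed

lemma geo_sum: "(\<Sum>l<t. (2::real)^(t-l)) = 2^(t+1) - 2"
proof (induction t)
  case 0 then show ?case by simp
next
  case (Suc t)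
  have "(\<Sum>l<Suc t. (2::real)^(Suc t-l)) = (\<Sum>l<Suc t. 2 * 2^(t-l))"
    by (rule sum.cong) (auto simp: Suc_diff_le)
  also have "\<dots> = 2 * (\<Sum>l<t. 2^(t-l)) + 2" by (simp add: sum_distrib_left)
  finally show ?case using Suc by simp
qed

lemma vs_bound:
  assumes lll: "lll_reduced n (3/4) vs" and t: "t < length vs"
  shows "rinner n (vs ! t) (vs ! t) \<le> 2^t * rinner n (gso n vs ! t) (gso n vs ! t)"
proof -
  let ?G = "\<lambda>l. rinner n (gso n vs ! l) (gso n vs ! l)"
  have "(\<Sum>l<t. (gs_mu n vs t l)^2 * ?G l) \<le> (\<Sum>l<t. 1/4 * (2^(t-l) * ?G t))"
  proof (rule sum_mono)
    fix l assume l: "l \<in> {..<t}"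
    have mu: "\<bar>gs_mu n vs t l\<bar> \<le> 1/2" using lll t l unfolding lll_reduced_def by auto
    have "\<bar>gs_mu n vs t l\<bar>^2 \<le> (1/2)^2" by (rule power_mono[OF mu]) simp
    hence mu2: "(gs_mu n vs t l)^2 \<le> 1/4" by (simp add: power2_eq_square)
    show "(gs_mu n vs t l)^2 * ?G l \<le> 1/4 * (2^(t-l) * ?G t)"
      by (rule mult_mono[OF mu2 lll_pow[OF lll]]) (use l t in \<open>auto simp: rinner_self_nonneg\<close>)
  qed
  also have "\<dots> = 1/4 * (2^(t+1) - 2) * ?G t"
  proof -
    have "(\<Sum>l<t. 1/4 * (2^(t-l) * ?G t)) = 1/4 * (\<Sum>l<t. (2::real)^(t-l)) * ?G t"
      by (simp add: sum_distrib_left sum_distrib_right mult.assoc)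
    thus ?thesis by (simp only: geo_sum)
  qed
  finally have "rinner n (vs ! t) (vs ! t) \<le> ?G t + 1/4 * (2^(t+1) - 2) * ?G t"
    using vs_norm[OF t, of n] by linarith
  also have "\<dots> \<le> 2^t * ?G t"
  proof -
    have "1 + 1/4 * (2^(t+1) - 2) \<le> (2::real)^t"
    proof -
      have "(1::real) \<le> 2^t" by simp
      thus ?thesis by (simp add: field_simps)
    qed
    hence "(1 + 1/4 * (2^(t+1) - 2)) * ?G t \<le> 2^t * ?G t"
      by (rule mult_right_mono) (simp add: rinner_self_nonneg)
    thus ?thesis by (simp add: algebra_simps)
  qed
  finally show ?thesis .
qed

lemma key_lower:
  assumes J: "J < length vs" and c0: "\<forall>t. J < t \<and> t < length vs \<longrightarrow> c t = 0" and c1: "\<bar>c J\<bar> \<ge> 1"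
  shows "rinner n (gso n vs ! J) (gso n vs ! J) \<le> rinner n (\<lambda>k. \<Sum>t<length vs. c t * (vs ! t) k) (\<lambda>k. \<Sum>t<length vs. c t * (vs ! t) k)"
    (is "?G \<le> rinner n ?X ?X")
proof -
  have "rinner n ?X (gso n vs ! J) = (\<Sum>t<length vs. c t * rinner n (vs ! t) (gso n vs ! J))"
    by (rule rinner_sum_left)
  also have "\<dots> = (\<Sum>t<length vs. if t = J then c J * ?G else 0)"
  proof (rule sum.cong)
    fix t assume t: "t \<in> {..<length vs}"
    show "c t * rinner n (vs ! t) (gso n vs ! J) = (if t = J then c J * ?G else 0)"
    proof (cases "t \<le> J")
      case True then show ?thesis using vs_g_inner[OF J True, of n] by auto
    next
      case False then show ?thesis using c0 t by auto
    qed
  qed simp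
  also have "\<dots> = c J * ?G" using J by simp
  finally have e: "rinner n ?X (gso n vs ! J) = c J * ?G" .
  have cs: "(c J * ?G)^2 \<le> rinner n ?X ?X * ?G" using rinner_CS[of n ?X "gso n vs ! J"] e by simp
  have G0: "0 \<le> ?G" by (rule rinner_self_nonneg)
  have X0: "0 \<le> rinner n ?X ?X" by (rule rinner_self_nonneg)
  show ?thesis
  proof (cases "?G = 0")
    case True then show ?thesis using X0 by simp
  next
    case False
    hence Gp: "0 < ?G" using G0 by simp
    have "1 \<le> (c J)^2" using c1
      by (metis abs_ge_self abs_le_square_iff abs_one one_le_power order_trans)
    hence "?G * ?G \<le> (c J)^2 * ?G * ?G" using Gp by (simp add: mult_right_mono)
    also have "\<dots> = (c J * ?G)^2" by (simp add: power2_eq_square)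
    also have "\<dots> \<le> rinner n ?X ?X * ?G" by (rule cs)
    finally show ?thesis using Gp by simp
  qed
qed

lemma zspan_rep:
  assumes I: "finite I"
  shows "x \<in> zspan (f ` I) \<longleftrightarrow> (\<exists>a. x = (\<lambda>k. \<Sum>j\<in>I. a j * f j k))"
proof
  assume "x \<in> zspan (f ` I)"
  then obtain F c where x: "x = (\<lambda>k. \<Sum>v\<in>F. c v * v k)" and F: "finite F" "F \<subseteq> f ` I"
    unfolding zspan_def by blast
  define h where "h = inv_into I f"
  have fh: "\<And>w. w \<in> F \<Longrightarrow> f (h w) = w" using F unfolding h_def by (auto simp: f_inv_into_f)
  have hI: "\<And>w. w \<in> F \<Longrightarrow> h w \<in> I" using F unfolding h_def by (auto intro: inv_into_into)
  have inj: "inj_on h F" by (metis fh inj_onI)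
  define a where "a j = (if j \<in> h ` F then c (f j) else 0)" for j
  have "(\<Sum>v\<in>F. c v * v k) = (\<Sum>j\<in>I. a j * f j k)" for k
  proof -
    have "(\<Sum>v\<in>F. c v * v k) = (\<Sum>v\<in>F. c (f (h v)) * f (h v) k)" by (rule sum.cong) (auto simp: fh)
    also have "\<dots> = (\<Sum>j\<in>h ` F. c (f j) * f j k)" by (rule sum.reindex[OF inj, symmetric, unfolded comp_def])
    also have "\<dots> = (\<Sum>j\<in>I. if j \<in> h ` F then c (f j) * f j k else 0)"
    proof -
      have "I \<inter> h ` F = h ` F" using hI by auto
      thus ?thesis using sum.inter_restrict[OF I, of "\<lambda>j. c (f j) * f j k" "h ` F"] by simp
    qed
    also have "\<dots> = (\<Sum>j\<in>I. a j * f j k)" unfolding a_def by (rule sum.cong) auto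
    finally show ?thesis .
  qed
  thus "\<exists>a. x = (\<lambda>k. \<Sum>j\<in>I. a j * f j k)" using x by auto
next
  assume "\<exists>a. x = (\<lambda>k. \<Sum>j\<in>I. a j * f j k)"
  then obtain a where x: "x = (\<lambda>k. \<Sum>j\<in>I. a j * f j k)" by blast
  define c where "c w = (\<Sum>j\<in>{j \<in> I. f j = w}. a j)" for w
  have "(\<Sum>j\<in>I. a j * f j k) = (\<Sum>w\<in>f ` I. c w * w k)" for k
  proof -
    have "(\<Sum>j\<in>I. a j * f j k) = (\<Sum>w\<in>f ` I. \<Sum>j\<in>{j \<in> I. f j = w}. a j * f j k)"
      by (rule sum.image_gen[OF I])
    also have "\<dots> = (\<Sum>w\<in>f ` I. c w * w k)"
      unfolding c_def sum_distrib_right by (rule sum.cong) (auto intro!: sum.cong)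
    finally show ?thesis .
  qed
  hence "x = (\<lambda>k. \<Sum>w\<in>f ` I. c w * w k)" using x by auto
  thus "x \<in> zspan (f ` I)" unfolding zspan_def using I by blast
qed

lemma zspan_closed:
  assumes I: "finite I" and F: "finite F" "F \<subseteq> zspan (f ` I)"
  shows "(\<lambda>k. \<Sum>v\<in>F. c v * v k) \<in> zspan (f ` I)"
proof -
  have "\<forall>v\<in>F. \<exists>a. v = (\<lambda>k. \<Sum>j\<in>I. a j * f j k)" using F zspan_rep[OF I] by blast
  from bchoice[OF this] obtain A where A: "\<forall>v\<in>F. v = (\<lambda>k. \<Sum>j\<in>I. A v j * f j k)" by blast
  have "(\<Sum>v\<in>F. c v * v k) = (\<Sum>j\<in>I. (\<Sum>v\<in>F. c v * A v j) * f j k)" for k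
  proof -
    have "(\<Sum>v\<in>F. c v * v k) = (\<Sum>v\<in>F. c v * (\<Sum>j\<in>I. A v j * f j k))"
    proof (rule sum.cong)
      fix v assume "v \<in> F"
      hence "v = (\<lambda>k. \<Sum>j\<in>I. A v j * f j k)" using A by blast
      hence "v k = (\<Sum>j\<in>I. A v j * f j k)" by (rule fun_cong[where x=k, THEN trans]) simp
      thus "c v * v k = c v * (\<Sum>j\<in>I. A v j * f j k)" by (simp only:)
    qed simp
    also have "\<dots> = (\<Sum>v\<in>F. \<Sum>j\<in>I. c v * A v j * f j k)"
      by (simp add: sum_distrib_left mult.assoc)
    also have "\<dots> = (\<Sum>j\<in>I. \<Sum>v\<in>F. c v * A v j * f j k)"
      by (rule sum.swap)
    also have "\<dots> = (\<Sum>j\<in>I. (\<Sum>v\<in>F. c v * A v j) * f j k)"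
      by (simp add: sum_distrib_right)
    finally show ?thesis .
  qed
  hence eq: "(\<lambda>k. \<Sum>v\<in>F. c v * v k) = (\<lambda>k. \<Sum>j\<in>I. (\<lambda>j. \<Sum>v\<in>F. c v * A v j) j * f j k)" by (intro ext) simp
  show ?thesis unfolding zspan_rep[OF I] by (rule exI, rule eq)
qed

definition liftv :: "nat \<Rightarrow> nat \<Rightarrow> (nat \<Rightarrow> nat \<Rightarrow> int) \<Rightarrow> (nat \<Rightarrow> int) \<Rightarrow> (nat \<Rightarrow> int)" where
  "liftv m p Pb v = (\<lambda>k. if k < p then (\<Sum>r<m. v r * Pb r k) else if k < p + m then v (k - p) else 0)"

lemma Rrow_sum: "(\<lambda>k. \<Sum>r<m. a r * Rrow p Pb r k) = liftv m p Pb a"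
proof
  fix k
  show "(\<Sum>r<m. a r * Rrow p Pb r k) = liftv m p Pb a k"
  proof (cases "k < p")
    case True then show ?thesis unfolding liftv_def Rrow_def by simp
  next
    case False
    have "(\<Sum>r<m. a r * Rrow p Pb r k) = (\<Sum>r<m. if r = k - p then a r else 0)"
      unfolding Rrow_def using False by (intro sum.cong) auto
    also have "\<dots> = (if k < p + m then a (k - p) else 0)" using False by auto
    finally show ?thesis unfolding liftv_def using False by simp
  qed
qed

lemma R_char: "x \<in> lattice_R m p Pb \<longleftrightarrow> (\<exists>a. x = liftv m p Pb a)"
  unfolding lattice_R_def zspan_rep[OF finite_lessThan] Rrow_sum by simp

lemma liftv_restrict: "liftv m p Pb (\<lambda>k. if k < m then a k else 0) = liftv m p Pb a"
  unfolding liftv_def by (intro ext) (auto intro!: sum.cong)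

lemma pr_liftv: "pr m p (liftv m p Pb a) = (\<lambda>k. if k < m then a k else 0)"
  unfolding pr_def liftv_def by auto

lemma R_lift_pr: "x \<in> lattice_R m p Pb \<Longrightarrow> x = liftv m p Pb (pr m p x)"
  unfolding R_char by (auto simp: pr_liftv liftv_restrict)

lemma L2_const_bound:
  assumes "\<And>k. k \<in> A \<Longrightarrow> \<bar>f k\<bar> \<le> c"
  shows "L2_set f A \<le> sqrt (card A) * c"
proof -
  have c0: "0 \<le> c" if "A \<noteq> {}" using assms that by (meson abs_ge_zero all_not_in_conv order_trans)
  have "L2_set f A = L2_set (\<lambda>k. \<bar>f k\<bar>) A" unfolding L2_set_def by simp
  also have "\<dots> \<le> L2_set (\<lambda>k. c) A" by (rule L2_set_mono) (auto simp: assms)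
  also have "\<dots> = sqrt (card A) * \<bar>c\<bar>" by (rule L2_set_constant)
  also have "\<dots> = sqrt (card A) * c" using c0 by (cases "A = {}") auto
  finally show ?thesis .
qed

lemma vE_bound:
  fixes v :: "nat \<Rightarrow> real"
  assumes pm: "p \<le> m" and E: "\<And>r k. r < m \<Longrightarrow> k < p \<Longrightarrow> \<bar>E r k\<bar> \<le> 1/2"
  shows "L2_set (\<lambda>k. \<Sum>r<m. v r * E r k) {..<p} \<le> real m / 2 * L2_set v {..<m}"
proof -
  have co: "\<bar>\<Sum>r<m. v r * E r k\<bar> \<le> 1/2 * (sqrt m * L2_set v {..<m})" if k: "k < p" for k
  proof -
    have "\<bar>\<Sum>r<m. v r * E r k\<bar> \<le> (\<Sum>r<m. \<bar>v r\<bar> * \<bar>E r k\<bar>)"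
      by (rule order_trans[OF sum_abs]) (simp add: abs_mult)
    also have "\<dots> \<le> (\<Sum>r<m. \<bar>v r\<bar> * (1/2))"
      by (rule sum_mono, rule mult_left_mono) (use E k in auto)
    also have "\<dots> = 1/2 * (\<Sum>r<m. \<bar>v r\<bar> * \<bar>1\<bar>)" by (simp add: sum_distrib_left mult.commute)
    also have "(\<Sum>r<m. \<bar>v r\<bar> * \<bar>1::real\<bar>) \<le> L2_set v {..<m} * L2_set (\<lambda>_. 1) {..<m}"
      by (rule L2_set_mult_ineq)
    also have "L2_set (\<lambda>_. 1::real) {..<m} = sqrt m" by (simp add: L2_set_constant)
    finally show ?thesis by (simp add: mult.commute)
  qed
  have "L2_set (\<lambda>k. \<Sum>r<m. v r * E r k) {..<p} \<le> sqrt (card {..<p}) * (1/2 * (sqrt m * L2_set v {..<m}))"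
    by (rule L2_const_bound) (use co in auto)
  also have "\<dots> = 1/2 * (sqrt p * sqrt m) * L2_set v {..<m}" by simp
  also have "\<dots> \<le> 1/2 * real m * L2_set v {..<m}"
  proof -
    have "sqrt p * sqrt m \<le> sqrt m * sqrt m" using pm by (intro mult_right_mono) auto
    hence "sqrt p * sqrt m \<le> real m" by simp
    thus ?thesis by (intro mult_right_mono) auto
  qed
  finally show ?thesis by simp
qed

lemma sum_shift1: "(\<Sum>j\<in>{1..m}. g j) = (\<Sum>t<m. g (Suc t)::'a::comm_monoid_add)"
proof (induction m)
  case 0 then show ?case by simp
next
  case (Suc m)
  have "{1..Suc m} = insert (Suc m) {1..m}" by auto
  then show ?case using Suc by (simp add: add.commute)
qed

lemma split_sq: "(\<Sum>k<p+(m::nat). (f k)::real) = (\<Sum>k<p. f k) + (\<Sum>r<m. f (p+r))"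
proof (induction m)
  case 0 then show ?case by simp
next
  case (Suc m) then show ?case by (simp add: add.assoc)
qed

lemma inorm_L2: "inorm n x = L2_set (\<lambda>k. real_of_int (x k)) {..<n}"
  unfolding inorm_def L2_set_def by simp

lemma inorm_sq: "(inorm n x)^2 = (\<Sum>k<n. (real_of_int (x k))^2)"
  unfolding inorm_def by (simp add: sum_nonneg)

lemma inorm_nonneg: "0 \<le> inorm n x"
  unfolding inorm_def by (intro real_sqrt_ge_zero sum_nonneg) simp

lemma inorm_pr_le: "inorm m (pr m p x) \<le> inorm (p+m) x"
proof -
  have "(\<Sum>k<m. (real_of_int (pr m p x k))^2) = (\<Sum>r<m. (real_of_int (x (p+r)))^2)"
    unfolding pr_def by simp
  also have "\<dots> \<le> (\<Sum>k<p+m. (real_of_int (x k))^2)"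
    by (subst split_sq) (simp add: sum_nonneg)
  finally show ?thesis unfolding inorm_def by simp
qed

lemma abs_le_inorm: "k < m \<Longrightarrow> \<bar>real_of_int (u k)\<bar> \<le> inorm m u"
proof -
  assume k: "k < m"
  have "(real_of_int (u k))^2 \<le> (\<Sum>k<m. (real_of_int (u k))^2)"
    by (rule member_le_sum[of k _ "\<lambda>k. (real_of_int (u k))^2"]) (use k in auto)
  hence "sqrt ((real_of_int (u k))^2) \<le> inorm m u" unfolding inorm_def by (rule real_sqrt_le_mono)
  thus ?thesis by simp
qed

lemma inorm_zero: "inorm n x = 0 \<Longrightarrow> k < n \<Longrightarrow> x k = 0"
proof -
  assume a: "inorm n x = 0" "k < n"
  hence "(\<Sum>k<n. (real_of_int (x k))^2) = 0" unfolding inorm_def by simp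
  hence "\<forall>k\<in>{..<n}. (real_of_int (x k))^2 = 0" by (subst (asm) sum_nonneg_eq_0_iff) auto
  thus ?thesis using a by auto
qed

lemma finite_short: "finite {u. u \<in> zvecs m \<and> inorm m u \<le> B}"
proof -
  define N where "N = \<lceil>B\<rceil>"
  have "{u. u \<in> zvecs m \<and> inorm m u \<le> B} \<subseteq> {f. \<forall>x. (x \<in> {..<m} \<longrightarrow> f x \<in> {-N..N}) \<and> (x \<notin> {..<m} \<longrightarrow> f x = 0)}"
  proof (clarify)
    fix u x assume u: "u \<in> zvecs m" "inorm m u \<le> B"
    show "(x \<in> {..<m} \<longrightarrow> u x \<in> {-N..N}) \<and> (x \<notin> {..<m} \<longrightarrow> u x = 0)"
    proof (intro conjI impI)
      assume "x \<in> {..<m}"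
      hence "\<bar>real_of_int (u x)\<bar> \<le> B" using abs_le_inorm[of x m u] u by auto
      hence "\<bar>real_of_int (u x)\<bar> \<le> real_of_int N" unfolding N_def by linarith
      thus "u x \<in> {-N..N}" by auto
    next
      assume "x \<notin> {..<m}" thus "u x = 0" using u unfolding zvecs_def by auto
    qed
  qed
  moreover have "finite {f. \<forall>x. (x \<in> {..<m} \<longrightarrow> f x \<in> {-N..N}) \<and> (x \<notin> {..<m} \<longrightarrow> f x = (0::int))}"
    by (rule finite_set_of_finite_funs) auto
  ultimately show ?thesis by (rule finite_subset)
qed

lemma eps_lemma:
  assumes v: "v \<in> zvecs m" "inorm m v \<le> B" "vecmat m p P v \<noteq> (\<lambda>_. 0)"
    and cond: "(if eps m p P B = \<infinity> then 0 else real m * B / real_of_ereal (eps m p P B)) \<le> beta"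
    and beta: "beta > 0"
  shows "real m * B \<le> beta * rnorm p (vecmat m p P v)"
proof -
  define X where "X = {rnorm p (vecmat m p P u) | u. u \<in> zvecs m \<and> inorm m u \<le> B \<and> vecmat m p P u \<noteq> (\<lambda>_. 0)}"
  define r0 where "r0 = rnorm p (vecmat m p P v)"
  have r0X: "r0 \<in> X" unfolding X_def r0_def using v by blast
  have finX: "finite X"
  proof -
    have "X \<subseteq> (\<lambda>u. rnorm p (vecmat m p P u)) ` {u. u \<in> zvecs m \<and> inorm m u \<le> B}"
      unfolding X_def by blast
    thus ?thesis by (rule finite_subset[OF _ finite_imageI[OF finite_short]])
  qed
  have pos: "\<And>x. x \<in> X \<Longrightarrow> 0 < x"
  proof -
    fix x assume "x \<in> X"
    then obtain u where x: "x = rnorm p (vecmat m p P u)" and nz: "vecmat m p P u \<noteq> (\<lambda>_. 0)"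
      unfolding X_def by blast
    then obtain k where k: "vecmat m p P u k \<noteq> 0" by (meson ext)
    hence kp: "k < p" unfolding vecmat_def by (auto split: if_splits)
    have "0 < (vecmat m p P u k)^2" using k by simp
    also have "\<dots> \<le> (\<Sum>k<p. (vecmat m p P u k)^2)"
      by (rule member_le_sum[of k _ "\<lambda>k. (vecmat m p P u k)^2"]) (use kp in auto)
    finally have "0 < (\<Sum>k<p. (vecmat m p P u k)^2)" .
    thus "0 < x" unfolding x rnorm_def rinner_def by (simp add: power2_eq_square)
  qed
  define e0 where "e0 = Min X"
  have "Min X \<in> X" using finX r0X by (intro Min_in) auto
  hence e0pos: "0 < e0" unfolding e0_def using pos by blast
  have lo: "ereal e0 \<le> eps m p P B"
    unfolding eps_def X_def[symmetric] e0_def using finX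
    by (auto intro!: Inf_greatest)
  have hi: "eps m p P B \<le> ereal r0"
    unfolding eps_def X_def[symmetric] using r0X by (auto intro!: Inf_lower)
  obtain e where e: "eps m p P B = ereal e" using lo hi
    by (cases "eps m p P B") auto
  have ee: "e0 \<le> e" "e \<le> r0" using lo hi e by auto
  have "real m * B / e \<le> beta" using cond e by simp
  hence "real m * B \<le> beta * e" using e0pos ee by (simp add: divide_le_eq)
  also have "\<dots> \<le> beta * r0" using ee beta by simp
  finally show ?thesis unfolding r0_def .
qed

lemma sorted_chain:
  fixes b :: "nat \<Rightarrow> nat \<Rightarrow> int" and j j' m :: nat
  assumes sorted: "\<forall>j. 1 \<le> j \<and> j < m \<longrightarrow> inorm n (b j) \<le> inorm n (b (j + 1))"
    and "1 \<le> j" "j \<le> j'" "j' \<le> m"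
  shows "inorm n (b j) \<le> inorm n (b j')"
  using assms(3,4)
proof (induction j' rule: dec_induct)
  case base then show ?case by simp
next
  case (step k)
  then have "inorm n (b k) \<le> inorm n (b (k+1))" using sorted assms(2) by auto
  then show ?case using step by simp
qed

lemma vs_nth: "t < m \<Longrightarrow> map (\<lambda>j k. real_of_int (b j k)) [1..<m+1] ! t = (\<lambda>k. real_of_int (b (Suc t) k))"
  by (simp add: nth_map del: upt_Suc)

lemma stepA:
  fixes b :: "nat \<Rightarrow> nat \<Rightarrow> int"
  assumes basis: "is_zbasis {1..m} b (lattice_R m p Pb)"
    and lll: "lll_reduced (p + m) (3/4) (map (\<lambda>j k. real_of_int (b j k)) [1..<m+1])"
    and sorted: "\<forall>j. 1 \<le> j \<and> j < m \<longrightarrow> inorm (p + m) (b j) \<le> inorm (p + m) (b (j + 1))"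
    and im: "i < m"
    and xR: "x \<in> lattice_R m p Pb"
    and small: "(\<Sum>k<p+m. (real_of_int (x k))^2) * 2^(m-1) < (inorm (p+m) (b (i+1)))^2"
  shows "\<exists>c. x = (\<lambda>k. \<Sum>j\<in>{1..i}. c j * b j k)"
proof -
  define n where "n = p + m"
  define vs where "vs = map (\<lambda>j k. real_of_int (b j k)) [1..<m+1]"
  have lenvs: "length vs = m" unfolding vs_def by simp
  have vsn: "\<And>t. t < m \<Longrightarrow> vs ! t = (\<lambda>k. real_of_int (b (Suc t) k))" unfolding vs_def by (rule vs_nth)
  have "x \<in> zspan (b ` {1..m})" using xR basis unfolding is_zbasis_def by simp
  then obtain c where x: "x = (\<lambda>k. \<Sum>j\<in>{1..m}. c j * b j k)" using zspan_rep[of "{1..m}" x b] by auto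
  have zero: "\<forall>j. i < j \<and> j \<le> m \<longrightarrow> c j = 0"
  proof (rule ccontr)
    assume "\<not> (\<forall>j. i < j \<and> j \<le> m \<longrightarrow> c j = 0)"
    define S where "S = {j. i < j \<and> j \<le> m \<and> c j \<noteq> 0}"
    have Sne: "S \<noteq> {}" using \<open>\<not> _\<close> unfolding S_def by auto
    have Sfin: "finite S" unfolding S_def by (rule finite_subset[of _ "{..m}"]) auto
    define Jb where "Jb = Max S"
    have JbS: "Jb \<in> S" unfolding Jb_def using Sne Sfin by (intro Max_in)
    have Jbmax: "\<And>j. j \<in> S \<Longrightarrow> j \<le> Jb" unfolding Jb_def using Sfin by auto
    define J where "J = Jb - 1"
    have JbJ: "Jb = Suc J" and Jm: "J < m" and iJ: "i \<le> J" using JbS unfolding J_def S_def by auto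
    define d where "d t = real_of_int (c (Suc t))" for t
    have Xeq: "(\<lambda>k. \<Sum>t<length vs. d t * (vs ! t) k) = (\<lambda>k. real_of_int (x k))"
    proof
      fix k
      have "real_of_int (x k) = (\<Sum>j\<in>{1..m}. real_of_int (c j) * real_of_int (b j k))"
        unfolding x by simp
      also have "\<dots> = (\<Sum>t<m. real_of_int (c (Suc t)) * real_of_int (b (Suc t) k))"
        by (rule sum_shift1)
      also have "\<dots> = (\<Sum>t<length vs. d t * (vs ! t) k)"
        unfolding lenvs d_def by (rule sum.cong) (auto simp: vsn)
      finally show "(\<Sum>t<length vs. d t * (vs ! t) k) = real_of_int (x k)" by simp
    qed
    have c0: "\<forall>t. J < t \<and> t < length vs \<longrightarrow> d t = 0"
    proof (intro allI impI)
      fix t assume t: "J < t \<and> t < length vs"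
      have "Suc t \<notin> S" using Jbmax[of "Suc t"] t JbJ by auto
      thus "d t = 0" using t iJ lenvs unfolding S_def d_def by auto
    qed
    have c1: "\<bar>d J\<bar> \<ge> 1"
    proof -
      have "c Jb \<noteq> 0" using JbS unfolding S_def by auto
      hence "\<bar>c Jb\<bar> \<ge> 1" by linarith
      thus ?thesis unfolding d_def JbJ by linarith
    qed
    have kl: "rinner n (gso n vs ! J) (gso n vs ! J) \<le> rinner n (\<lambda>k. \<Sum>t<length vs. d t * (vs ! t) k) (\<lambda>k. \<Sum>t<length vs. d t * (vs ! t) k)"
      by (rule key_lower) (use Jm lenvs c0 c1 in auto)
    also have "\<dots> = (\<Sum>k<n. (real_of_int (x k))^2)" unfolding Xeq rinner_def by (simp add: power2_eq_square)
    finally have kl': "rinner n (gso n vs ! J) (gso n vs ! J) \<le> (\<Sum>k<n. (real_of_int (x k))^2)" .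
    have vb: "rinner n (vs ! J) (vs ! J) \<le> 2^J * rinner n (gso n vs ! J) (gso n vs ! J)"
      using vs_bound[of n vs J] lll Jm lenvs unfolding vs_def n_def by auto
    have vJ: "rinner n (vs ! J) (vs ! J) = (inorm n (b Jb))^2"
      unfolding inorm_sq rinner_def vsn[OF Jm] JbJ by (simp add: power2_eq_square)
    have so: "inorm n (b (i+1)) \<le> inorm n (b Jb)"
      unfolding n_def by (rule sorted_chain[OF sorted]) (use JbS S_def in auto)
    hence so2: "(inorm n (b (i+1)))^2 \<le> (inorm n (b Jb))^2"
      by (intro power_mono) (auto simp: inorm_nonneg)
    have "(2::real)^J \<le> 2^(m-1)" using Jm by (intro power_increasing) auto
    hence "2^J * rinner n (gso n vs ! J) (gso n vs ! J) \<le> 2^(m-1) * rinner n (gso n vs ! J) (gso n vs ! J)"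
      by (intro mult_right_mono) (auto simp: rinner_self_nonneg)
    also have "\<dots> \<le> 2^(m-1) * (\<Sum>k<n. (real_of_int (x k))^2)"
      using kl' by (intro mult_left_mono) auto
    finally have "(inorm n (b (i+1)))^2 \<le> 2^(m-1) * (\<Sum>k<n. (real_of_int (x k))^2)"
      using so2 vJ vb by linarith
    thus False using small unfolding n_def by (simp add: mult.commute)
  qed
  have "(\<Sum>j\<in>{1..m}. c j * b j k) = (\<Sum>j\<in>{1..i}. c j * b j k)" for k
    by (rule sum.mono_neutral_right) (use zero im in auto)
  hence "x = (\<lambda>k. \<Sum>j\<in>{1..i}. c j * b j k)" unfolding x by simp
  thus ?thesis by blast
qed

lemma liftv_real:
  assumes "k < p"
  shows "real_of_int (liftv m p Pb v k) = (\<Sum>r<m. real_of_int (v r) * (real_of_int (Pb r k) - beta * P r k))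
     + beta * (\<Sum>r<m. real_of_int (v r) * P r k)"
proof -
  have "(\<Sum>r<m. real_of_int (v r) * (real_of_int (Pb r k) - beta * P r k)) + beta * (\<Sum>r<m. real_of_int (v r) * P r k)
     = (\<Sum>r<m. real_of_int (v r) * (real_of_int (Pb r k) - beta * P r k) + beta * (real_of_int (v r) * P r k))"
    by (simp add: sum.distrib sum_distrib_left)
  also have "\<dots> = (\<Sum>r<m. real_of_int (v r) * real_of_int (Pb r k))"
    by (rule sum.cong) (auto simp: algebra_simps)
  finally show ?thesis using assms unfolding liftv_def by simp
qed

lemma lift_norm:
  assumes pm: "p \<le> m" and E: "\<forall>r<m. \<forall>j<p. \<bar>real_of_int (Pb r j) - beta * P r j\<bar> \<le> 1/2"
    and u: "u \<in> Lam m p P"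
  shows "(\<Sum>k<p+m. (real_of_int (liftv m p Pb u k))^2) \<le> (1 + (real m)^2/4) * (inorm m u)^2"
proof -
  define vE where "vE k = (\<Sum>r<m. real_of_int (u r) * (real_of_int (Pb r k) - beta * P r k))" for k
  have vm: "vecmat m p P u = (\<lambda>_. 0)" using u unfolding Lam_def by simp
  have z: "(\<Sum>r<m. real_of_int (u r) * P r k) = 0" if "k < p" for k
    using fun_cong[OF vm, of k] that unfolding vecmat_def by simp
  have first: "(\<Sum>k<p. (real_of_int (liftv m p Pb u k))^2) = (L2_set vE {..<p})^2"
  proof -
    have eq: "real_of_int (liftv m p Pb u k) = vE k" if "k < p" for k
      using liftv_real[OF that, of m Pb u beta P] z[OF that] unfolding vE_def by simp
    have "(\<Sum>k<p. (real_of_int (liftv m p Pb u k))^2) = (\<Sum>k<p. (vE k)^2)"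
      by (rule sum.cong) (auto simp: eq)
    thus ?thesis unfolding L2_set_def by (simp add: sum_nonneg)
  qed
  have "L2_set vE {..<p} \<le> real m / 2 * L2_set (\<lambda>r. real_of_int (u r)) {..<m}"
    unfolding vE_def by (rule vE_bound[OF pm]) (use E in auto)
  hence "(L2_set vE {..<p})^2 \<le> (real m / 2 * inorm m u)^2"
    unfolding inorm_L2[symmetric] by (intro power_mono) auto
  hence f2: "(\<Sum>k<p. (real_of_int (liftv m p Pb u k))^2) \<le> (real m)^2/4 * (inorm m u)^2"
    unfolding first by (simp add: power_mult_distrib power_divide)
  have second: "(\<Sum>r<m. (real_of_int (liftv m p Pb u (p+r)))^2) = (inorm m u)^2"
    unfolding inorm_sq liftv_def by simp
  show ?thesis unfolding split_sq using f2 second by (simp add: algebra_simps)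
qed

lemma stepB:
  fixes x :: "nat \<Rightarrow> int"
  assumes m2: "2 \<le> m" and pm: "p \<le> m" and beta: "beta > 0"
    and E: "\<forall>r<m. \<forall>j<p. \<bar>real_of_int (Pb r j) - beta * P r j\<bar> \<le> 1/2"
    and xR: "x \<in> lattice_R m p Pb"
    and xn: "inorm (p+m) x \<le> Bi" and BB: "Bi < B"
    and cond: "(if eps m p P B = \<infinity> then 0 else real m * B / real_of_ereal (eps m p P B)) \<le> beta"
  shows "vecmat m p P (pr m p x) = (\<lambda>_. 0)"
proof (rule ccontr)
  assume nz: "vecmat m p P (pr m p x) \<noteq> (\<lambda>_. 0)"
  define v where "v = pr m p x"
  have vz: "v \<in> zvecs m" unfolding v_def pr_def zvecs_def by auto
  have vn: "inorm m v \<le> Bi" using inorm_pr_le[of m p x] xn unfolding v_def by linarith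
  have Bi0: "0 \<le> Bi" using xn inorm_nonneg[of "p+m" x] by linarith
  have "real m * B \<le> beta * rnorm p (vecmat m p P v)"
    by (rule eps_lemma[OF vz _ _ cond beta]) (use vn BB nz v_def in auto)
  also have "\<dots> = L2_set (\<lambda>k. beta * vecmat m p P v k) {..<p}"
    unfolding rnorm_L2 using beta by (simp add: L2_set_right_distrib)
  also have "\<dots> = L2_set (\<lambda>k. real_of_int (x k) + - (\<Sum>r<m. real_of_int (v r) * (real_of_int (Pb r k) - beta * P r k))) {..<p}"
  proof (rule L2_set_cong)
    fix k assume k: "k \<in> {..<p}"
    have "x = liftv m p Pb v" unfolding v_def by (rule R_lift_pr[OF xR])
    hence "real_of_int (x k) = (\<Sum>r<m. real_of_int (v r) * (real_of_int (Pb r k) - beta * P r k)) + beta * (\<Sum>r<m. real_of_int (v r) * P r k)"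
      using liftv_real[of k p m Pb v beta P] k by simp
    thus "beta * vecmat m p P v k = real_of_int (x k) + - (\<Sum>r<m. real_of_int (v r) * (real_of_int (Pb r k) - beta * P r k))"
      using k unfolding vecmat_def by simp
  qed simp
  also have "\<dots> \<le> L2_set (\<lambda>k. real_of_int (x k)) {..<p} + L2_set (\<lambda>k. - (\<Sum>r<m. real_of_int (v r) * (real_of_int (Pb r k) - beta * P r k))) {..<p}"
    by (rule L2_set_triangle_ineq)
  also have "L2_set (\<lambda>k. - (\<Sum>r<m. real_of_int (v r) * (real_of_int (Pb r k) - beta * P r k))) {..<p}
      = L2_set (\<lambda>k. (\<Sum>r<m. real_of_int (v r) * (real_of_int (Pb r k) - beta * P r k))) {..<p}"
    unfolding L2_set_def by simp
  also have "\<dots> \<le> real m / 2 * L2_set (\<lambda>r. real_of_int (v r)) {..<m}"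
    by (rule vE_bound[OF pm]) (use E in auto)
  also have "L2_set (\<lambda>k. real_of_int (x k)) {..<p} \<le> inorm (p+m) x"
    unfolding inorm_def L2_set_def by (intro real_sqrt_le_mono) (simp add: split_sq sum_nonneg)
  finally have "real m * B \<le> inorm (p+m) x + real m / 2 * inorm m v" unfolding inorm_L2 by simp
  also have "\<dots> \<le> Bi + real m / 2 * Bi" using xn vn by (intro add_mono mult_left_mono) auto
  finally have A: "real m * B \<le> Bi + real m / 2 * Bi" .
  have "real m * Bi < real m * B" using BB m2 by simp
  moreover have "Bi + real m / 2 * Bi \<le> real m * Bi"
  proof -
    have "(1 + real m / 2) * Bi \<le> real m * Bi" using m2 Bi0 by (intro mult_right_mono) auto
    thus ?thesis by (simp add: algebra_simps)
  qed
  ultimately show False using A by linarith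
qed

lemma kappa_ineq:
  assumes m2: "2 \<le> m"
  shows "(1 + (real m)^2/4) * (kappa m)^2 * 2^(m-1) < 1"
proof -
  have k2: "(kappa m)^2 = 1 / (real m)^2 * 2 powr (- (real m + 1))"
  proof -
    have "(2 powr (- (real m + 1) / 2))^2 = (2::real) powr (- (real m + 1) / 2) * 2 powr (- (real m + 1) / 2)"
      by (simp add: power2_eq_square)
    also have "\<dots> = 2 powr (- (real m + 1))" by (simp add: powr_add[symmetric])
    finally show ?thesis unfolding kappa_def by (simp add: power_mult_distrib power_divide)
  qed
  have p2: "(2::real) powr (- (real m + 1)) * 2^(m-1) = 1/4"
  proof -
    have "(2::real)^(m-1) = 2 powr (real (m-1))" by (simp add: powr_realpow)
    also have "real (m-1) = real m - 1" using m2 by simp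
    finally have "(2::real)^(m-1) = 2 powr (real m - 1)" .
    hence "(2::real) powr (- (real m + 1)) * 2^(m-1) = 2 powr (- (real m + 1)) * 2 powr (real m - 1)"
      by simp
    also have "\<dots> = 2 powr (- (real m + 1) + (real m - 1))" by (rule powr_add[symmetric])
    also have "- (real m + 1) + (real m - 1) = -2" by simp
    also have "(2::real) powr (-2) = 1/4" by (simp add: powr_minus powr_numeral)
    finally show ?thesis .
  qed
  have "(1 + (real m)^2/4) * (kappa m)^2 * 2^(m-1) = (1 + (real m)^2/4) / (real m)^2 * (2 powr (- (real m + 1)) * 2^(m-1))"
    unfolding k2 by simp
  also have "\<dots> = (1 + (real m)^2/4) / (4 * (real m)^2)" unfolding p2 by simp
  also have "\<dots> < 1"
  proof -
    have "(real m)^2 \<ge> 4" using m2 by (metis numeral_le_real_of_nat_iff power2_nat_le_eq_le power_mono of_nat_0_le_iff power2_eq_square zero_le_numeral real_sqrt_four real_sqrt_le_iff real_sqrt_pow2 of_nat_numeral)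
    thus ?thesis by (simp add: divide_less_eq)
  qed
  finally show ?thesis .
qed

theorem proposition4p1:
  fixes m p :: nat and P :: "nat \<Rightarrow> nat \<Rightarrow> real" and beta :: real
    and Pb :: "nat \<Rightarrow> nat \<Rightarrow> int" and b :: "nat \<Rightarrow> nat \<Rightarrow> int" and i :: nat
  assumes "2 \<le> m" and "1 \<le> p" and "p \<le> m" and "beta > 0"
    and "\<forall>r<m. \<forall>j<p. \<bar>real_of_int (Pb r j) - beta * P r j\<bar> \<le> 1/2"
    and "is_zbasis {1..m} b (lattice_R m p Pb)"
    and "lll_reduced (p + m) (3/4) (map (\<lambda>j k. real_of_int (b j k)) [1..<m+1])"
    and "\<forall>j. 1 \<le> j \<and> j < m \<longrightarrow> inorm (p + m) (b j) \<le> inorm (p + m) (b (j + 1))"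
    and "i < m"
    and "Bseq (p + m) b i \<le> kappa m * Bseq (p + m) b (i + 1)"
  shows "is_zbasis {1..i} (\<lambda>j. pr m p (b j)) (Lam m p P)
       \<or> Lam m p P \<noteq> zspan {x \<in> Lam m p P. inorm m x \<le> kappa m * Bseq (p + m) b (i + 1)}
       \<or> phi m p P beta \<le> ereal (Bseq (p + m) b i)"
proof -
  note m2 = assms(1) and pm = assms(3) and beta = assms(4) and E = assms(5) and basis = assms(6)
    and lll = assms(7) and sorted = assms(8) and im = assms(9)
  define n where "n = p + m"
  define Bi where "Bi = Bseq n b i"
  define B1 where "B1 = inorm n (b (i+1))"
  have B1eq: "Bseq n b (i+1) = B1" unfolding Bseq_def B1_def by simp
  define S where "S = {x \<in> Lam m p P. inorm m x \<le> kappa m * B1}"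
  have bR: "\<And>j. j \<in> {1..m} \<Longrightarrow> b j \<in> lattice_R m p Pb" using basis unfolding is_zbasis_def by auto
  have Rsp: "lattice_R m p Pb = zspan (b ` {1..m})" using basis unfolding is_zbasis_def by auto
  have ind: "zindep {1..m} b" using basis unfolding is_zbasis_def by auto
  have B1pos: "0 < B1"
  proof (rule ccontr)
    assume "\<not> 0 < B1"
    hence B10: "inorm n (b (i+1)) = 0" using inorm_nonneg[of n "b (i+1)"] unfolding B1_def by linarith
    have bl: "b (i+1) = liftv m p Pb (pr m p (b (i+1)))" by (rule R_lift_pr[OF bR]) (use im in auto)
    have b0: "b (i+1) k = 0" for k
    proof (cases "k < n")
      case True then show ?thesis using inorm_zero[OF B10] by auto
    next
      case False
      hence "liftv m p Pb (pr m p (b (i+1))) k = 0" unfolding liftv_def n_def by auto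
      then show ?thesis using bl by metis
    qed
    define c where "c j = (if j = i+1 then (1::int) else 0)" for j
    have "(\<lambda>k. \<Sum>j\<in>{1..m}. c j * b j k) = (\<lambda>_. 0)"
    proof
      fix k
      have "(\<Sum>j\<in>{1..m}. c j * b j k) = (\<Sum>j\<in>{1..m}. if j = i+1 then b (i+1) k else 0)"
        unfolding c_def by (rule sum.cong) auto
      also have "\<dots> = b (i+1) k" using im by simp
      finally show "(\<Sum>j\<in>{1..m}. c j * b j k) = 0" using b0 by simp
    qed
    hence "c (i+1) = 0" using ind im unfolding zindep_def by auto
    thus False unfolding c_def by simp
  qed
  have main: "is_zbasis {1..i} (\<lambda>j. pr m p (b j)) (Lam m p P)"
    if notii: "Lam m p P = zspan S" and notiii: "\<not> phi m p P beta \<le> ereal Bi"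
  proof -
    obtain B where B0: "B \<ge> 0"
      and cond: "(if eps m p P B = \<infinity> then 0 else real m * B / real_of_ereal (eps m p P B)) \<le> beta"
      and BB: "Bi < B"
    proof -
      from notiii obtain a where a: "a \<in> ereal ` {B. B \<ge> 0 \<and>
          (if eps m p P B = \<infinity> then 0 else real m * B / real_of_ereal (eps m p P B)) \<le> beta}"
        and na: "\<not> a \<le> ereal Bi"
        unfolding phi_def Sup_le_iff by blast
      then obtain B where "a = ereal B" "B \<ge> 0"
        "(if eps m p P B = \<infinity> then 0 else real m * B / real_of_ereal (eps m p P B)) \<le> beta" by blast
      moreover have "Bi < B" using na calculation(1) by simp
      ultimately show ?thesis using that by blast
    qed
    have C1: "pr m p (b j) \<in> Lam m p P" if j: "j \<in> {1..i}" for j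
    proof -
      have "inorm n (b j) \<le> inorm n (b i)"
        unfolding n_def by (rule sorted_chain[OF sorted]) (use j im in auto)
      hence xn: "inorm (p+m) (b j) \<le> Bi" unfolding Bi_def Bseq_def n_def using j by auto
      have "vecmat m p P (pr m p (b j)) = (\<lambda>_. 0)"
        by (rule stepB[OF m2 pm beta E bR xn BB cond]) (use j im in auto)
      moreover have "pr m p (b j) \<in> zvecs m" unfolding pr_def zvecs_def by auto
      ultimately show ?thesis unfolding Lam_def by auto
    qed
    have C2: "zindep {1..i} (\<lambda>j. pr m p (b j))"
      unfolding zindep_def
    proof (intro allI impI)
      fix c assume c: "(\<lambda>k. \<Sum>j\<in>{1..i}. c j * pr m p (b j) k) = (\<lambda>_. 0)"
      define c' where "c' j = (if j \<le> i then c j else 0)" for j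
      define w where "w = (\<lambda>k. \<Sum>j\<in>{1..m}. c' j * b j k)"
      have wR: "w \<in> lattice_R m p Pb" unfolding Rsp w_def zspan_rep[OF finite_atLeastAtMost] by blast
      have wi: "w k = (\<Sum>j\<in>{1..i}. c j * b j k)" for k
      proof -
        have "w k = (\<Sum>j\<in>{1..i}. c' j * b j k)"
          unfolding w_def by (rule sum.mono_neutral_right) (use im in \<open>auto simp: c'_def\<close>)
        also have "\<dots> = (\<Sum>j\<in>{1..i}. c j * b j k)" by (rule sum.cong) (auto simp: c'_def)
        finally show ?thesis .
      qed
      have "pr m p w = (\<lambda>_. 0)"
      proof
        fix k
        show "pr m p w k = 0"
        proof (cases "k < m")
          case True
          have "pr m p w k = (\<Sum>j\<in>{1..i}. c j * pr m p (b j) k)"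
            unfolding pr_def wi using True by simp
          also have "\<dots> = 0" using fun_cong[OF c, of k] by simp
          finally show ?thesis .
        qed (simp add: pr_def)
      qed
      hence "w = liftv m p Pb (\<lambda>_. 0)" using R_lift_pr[OF wR] by simp
      hence "w = (\<lambda>_. 0)" unfolding liftv_def by auto
      hence cz: "\<forall>j\<in>{1..m}. c' j = 0" using ind unfolding zindep_def w_def by blast
      show "\<forall>j\<in>{1..i}. c j = 0"
      proof
        fix j assume "j \<in> {1..i}"
        hence j: "j \<in> {1..m}" "j \<le> i" using im by auto
        hence "c' j = 0" using cz by blast
        thus "c j = 0" using j(2) unfolding c'_def by simp
      qed
    qed
    have short: "u \<in> zspan ((\<lambda>j. pr m p (b j)) ` {1..i})" if u: "u \<in> S" for u
    proof -
      have uL: "u \<in> Lam m p P" and un: "inorm m u \<le> kappa m * B1" using u unfolding S_def by auto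
      have uz: "u \<in> zvecs m" using uL unfolding Lam_def by auto
      define x where "x = liftv m p Pb u"
      have xR: "x \<in> lattice_R m p Pb" unfolding x_def R_char by blast
      have k0: "0 \<le> kappa m" unfolding kappa_def by simp
      have "(inorm m u)^2 \<le> (kappa m * B1)^2" using un by (intro power_mono) (auto simp: inorm_nonneg)
      hence xle: "(\<Sum>k<p+m. (real_of_int (x k))^2) \<le> (1 + (real m)^2/4) * (kappa m * B1)^2"
        using lift_norm[OF pm E uL] unfolding x_def
        by (meson order_trans mult_left_mono add_nonneg_nonneg zero_le_one zero_le_power2 divide_nonneg_pos zero_less_numeral)
      hence "(\<Sum>k<p+m. (real_of_int (x k))^2) * 2^(m-1) \<le> ((1 + (real m)^2/4) * (kappa m)^2 * 2^(m-1)) * B1^2"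
      proof -
        have "(\<Sum>k<p+m. (real_of_int (x k))^2) * 2^(m-1) \<le> ((1 + (real m)^2/4) * (kappa m * B1)^2) * 2^(m-1)"
          by (rule mult_right_mono[OF xle]) simp
        also have "\<dots> = ((1 + (real m)^2/4) * (kappa m)^2 * 2^(m-1)) * B1^2"
          by (simp add: power_mult_distrib)
        finally show ?thesis .
      qed
      also have "\<dots> < 1 * B1^2" using kappa_ineq[OF m2] B1pos by (intro mult_strict_right_mono) auto
      finally have small: "(\<Sum>k<p+m. (real_of_int (x k))^2) * 2^(m-1) < (inorm (p+m) (b (i+1)))^2"
        unfolding B1_def n_def by simp
      obtain c where xc: "x = (\<lambda>k. \<Sum>j\<in>{1..i}. c j * b j k)"
        using stepA[OF basis lll sorted im xR small] by blast
      have "u = pr m p x" unfolding x_def pr_liftv using uz unfolding zvecs_def by auto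
      also have "\<dots> = (\<lambda>k. \<Sum>j\<in>{1..i}. c j * pr m p (b j) k)" unfolding xc pr_def by auto
      finally show ?thesis unfolding zspan_rep[OF finite_atLeastAtMost] by blast
    qed
    have C3: "Lam m p P = zspan ((\<lambda>j. pr m p (b j)) ` {1..i})"
    proof
      show "Lam m p P \<subseteq> zspan ((\<lambda>j. pr m p (b j)) ` {1..i})"
      proof
        fix x assume "x \<in> Lam m p P"
        hence "x \<in> zspan S" using notii by simp
        then obtain F c where x: "x = (\<lambda>k. \<Sum>v\<in>F. c v * v k)" and F: "finite F" "F \<subseteq> S"
          unfolding zspan_def by blast
        show "x \<in> zspan ((\<lambda>j. pr m p (b j)) ` {1..i})" unfolding x
          by (rule zspan_closed[OF finite_atLeastAtMost F(1)]) (use F short in auto)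
      qed
    next
      show "zspan ((\<lambda>j. pr m p (b j)) ` {1..i}) \<subseteq> Lam m p P"
      proof
        fix x assume "x \<in> zspan ((\<lambda>j. pr m p (b j)) ` {1..i})"
        then obtain a where x: "x = (\<lambda>k. \<Sum>j\<in>{1..i}. a j * pr m p (b j) k)"
          unfolding zspan_rep[OF finite_atLeastAtMost] by blast
        have xz: "x \<in> zvecs m" unfolding x zvecs_def pr_def by auto
        have "vecmat m p P x = (\<lambda>_. 0)"
        proof
          fix k
          show "vecmat m p P x k = 0"
          proof (cases "k < p")
            case True
            have "(\<Sum>r<m. real_of_int (x r) * P r k) = (\<Sum>r<m. \<Sum>j\<in>{1..i}. real_of_int (a j) * (real_of_int (pr m p (b j) r) * P r k))"
              unfolding x by (simp add: sum_distrib_right mult.assoc)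
            also have "\<dots> = (\<Sum>j\<in>{1..i}. real_of_int (a j) * (\<Sum>r<m. real_of_int (pr m p (b j) r) * P r k))"
              by (subst sum.swap) (simp add: sum_distrib_left)
            also have "\<dots> = 0"
            proof (rule sum.neutral, rule ballI)
              fix j assume j: "j \<in> {1..i}"
              have "vecmat m p P (pr m p (b j)) = (\<lambda>_. 0)" using C1[OF j] unfolding Lam_def by auto
              from fun_cong[OF this, of k] True
              show "real_of_int (a j) * (\<Sum>r<m. real_of_int (pr m p (b j) r) * P r k) = 0"
                unfolding vecmat_def by simp
            qed
            finally show ?thesis unfolding vecmat_def using True by simp
          qed (simp add: vecmat_def)
        qed
        thus "x \<in> Lam m p P" using xz unfolding Lam_def by auto
      qed
    qed
    show ?thesis unfolding is_zbasis_def using C1 C2 C3 by blast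
  qed
  show ?thesis using main unfolding S_def B1eq[unfolded n_def, symmetric] Bi_def n_def by blast
qed

end
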